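(* Let $M$ be a von Neumann algebra acting on a separable Hilbert space $\mathcal H$, let $\Omega\in\mathcal H$ be a separating vector for $M$, and let $T\in\mathcal B(\mathcal H)$ satisfy $\ker T=\{0\}$ and be such that the linear map $M\ni x\mapsto Tx\Omega\in\mathcal H$ is compact. Then $L(x):=\|Tx\Omega\|$ is a dual-Lip-norm on $M$, i.e. $(M,L)$ is a Lip-von Neumann algebra.
   Context: A dual-Lip-norm on a von Neumann algebra $M$ is a norm on $M$ (everywhere finite) which induces the $w^*$-topology on bounded subsets of $M$; a Lip-von Neumann algebra is a von Neumann algebra endowed with such a norm. A linear map between Banach spaces is compact if it maps the closed unit ball to a relatively norm-compact set. *)

theory Defs
  imports "HOL-Analysis.Analysis"
begin

text \<open>A complex Hilbert space is modelled as a real Hilbert space 'h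
(class real_inner + complete_space, the real inner product being the real part
of the complex one) together with a complex structure J (multiplication by i):
a real-linear isometry with J o J = -id.\<close>

definition complex_structure :: "('h::{real_inner,complete_space} \<Rightarrow>\<^sub>L 'h) \<Rightarrow> bool" where
  "complex_structure J \<longleftrightarrow>
     (\<forall>x. J (J x) = - x) \<and> (\<forall>x y. inner (J x) (J y) = inner x y)"

text \<open>Bounded complex-linear operators (elements of B(H)): bounded real-linear maps commuting with J.\<close>
definition bounded_op :: "('h::{real_inner,complete_space} \<Rightarrow>\<^sub>L 'h) \<Rightarrow> ('h \<Rightarrow>\<^sub>L 'h) \<Rightarrow> bool" where
  "bounded_op J x \<longleftrightarrow> J o\<^sub>L x = x o\<^sub>L J"

definition cscale_op :: "('h::{real_inner,complete_space} \<Rightarrow>\<^sub>L 'h) \<Rightarrow> complex \<Rightarrow> ('h \<Rightarrow>\<^sub>L 'h) \<Rightarrow> ('h \<Rightarrow>\<^sub>L 'h)" where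
  "cscale_op J c x = Re c *\<^sub>R x + Im c *\<^sub>R (J o\<^sub>L x)"

definition is_adjoint :: "('h::real_inner \<Rightarrow>\<^sub>L 'h) \<Rightarrow> ('h \<Rightarrow>\<^sub>L 'h) \<Rightarrow> bool" where
  "is_adjoint x y \<longleftrightarrow> (\<forall>u v. inner (x u) v = inner u (y v))"

definition commutant :: "('h::{real_inner,complete_space} \<Rightarrow>\<^sub>L 'h) \<Rightarrow> ('h \<Rightarrow>\<^sub>L 'h) set \<Rightarrow> ('h \<Rightarrow>\<^sub>L 'h) set" where
  "commutant J S = {y. bounded_op J y \<and> (\<forall>x\<in>S. x o\<^sub>L y = y o\<^sub>L x)}"

definition von_neumann_algebra :: "('h::{real_inner,complete_space} \<Rightarrow>\<^sub>L 'h) \<Rightarrow> ('h \<Rightarrow>\<^sub>L 'h) set \<Rightarrow> bool" where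
  "von_neumann_algebra J M \<longleftrightarrow>
     M \<subseteq> {x. bounded_op J x} \<and> (\<forall>x\<in>M. \<exists>y\<in>M. is_adjoint x y) \<and>
     commutant J (commutant J M) = M"

definition separating_vector :: "('h::{real_inner,complete_space} \<Rightarrow>\<^sub>L 'h) set \<Rightarrow> 'h \<Rightarrow> bool" where
  "separating_vector M \<Omega> \<longleftrightarrow> (\<forall>x\<in>M. blinfun_apply x \<Omega> = 0 \<longrightarrow> x = (0::'h \<Rightarrow>\<^sub>L 'h))"

text \<open>The sigma-weak (= w*) topology on B(H): the weak topology induced by the normal
functionals x \<mapsto> \<Sum>n <x \<xi>_n, \<eta>_n> with \<Sum>||\<xi>_n||^2, \<Sum>||\<eta>_n||^2 < \<infinity>.
(Real parts suffice: the imaginary part of such a functional is the real part of another one.)\<close>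
definition normal_functional :: "('h::{real_inner,complete_space} \<Rightarrow>\<^sub>L 'h) \<Rightarrow> ('h \<Rightarrow>\<^sub>L 'h \<Rightarrow> real) \<Rightarrow> bool" where
  "normal_functional J \<phi> \<longleftrightarrow> (\<exists>\<xi> \<eta> :: nat \<Rightarrow> 'h.
      summable (\<lambda>n. (norm (\<xi> n))\<^sup>2) \<and> summable (\<lambda>n. (norm (\<eta> n))\<^sup>2) \<and>
      \<phi> = (\<lambda>x. \<Sum>n. inner (x (\<xi> n)) (\<eta> n)))"

definition sigma_weak_topology :: "('h::{real_inner,complete_space} \<Rightarrow>\<^sub>L 'h) \<Rightarrow> ('h \<Rightarrow>\<^sub>L 'h) topology" where
  "sigma_weak_topology J = topology_generated_by
     {{x. \<phi> x \<in> U} | \<phi> U. normal_functional J \<phi> \<and> open U}"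

definition L_topology :: "('h::{real_inner,complete_space} \<Rightarrow>\<^sub>L 'h) set \<Rightarrow> (('h \<Rightarrow>\<^sub>L 'h) \<Rightarrow> real) \<Rightarrow> ('h \<Rightarrow>\<^sub>L 'h) topology" where
  "L_topology M L = topology_generated_by {{y. L (y - x) < r} | x r. x \<in> M}"

definition dual_Lip_norm :: "('h::{real_inner,complete_space} \<Rightarrow>\<^sub>L 'h) \<Rightarrow> ('h \<Rightarrow>\<^sub>L 'h) set \<Rightarrow> (('h \<Rightarrow>\<^sub>L 'h) \<Rightarrow> real) \<Rightarrow> bool" where
  "dual_Lip_norm J M L \<longleftrightarrow>
     (\<forall>x\<in>M. 0 \<le> L x) \<and> (\<forall>x\<in>M. L x = 0 \<longrightarrow> x = 0) \<and>
     (\<forall>x\<in>M. \<forall>y\<in>M. L (x + y) \<le> L x + L y) \<and>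
     (\<forall>x\<in>M. \<forall>c. L (cscale_op J c x) = cmod c * L x) \<and>
     (\<forall>B. B \<subseteq> M \<and> bounded B \<longrightarrow>
        subtopology (L_topology M L) B = subtopology (sigma_weak_topology J) B)"

end

theory Submission
  imports Defs "HOL-Library.Diagonal_Subsequence"
begin


lemma vec_eq_inner:
  fixes a b :: "'a::real_inner"
  assumes "\<And>v. inner a v = inner b v" shows "a = b"
proof -
  have "inner (a - b) (a - b) = 0" using assms[of "a-b"] by (simp add: inner_diff_left)
  thus ?thesis by simp
qed

lemma riesz:
  fixes f :: "'h::{real_inner,complete_space} \<Rightarrow> real"
  assumes f: "bounded_linear f"
  shows "\<exists>u. \<forall>v. f v = inner v u"
proof (cases "\<forall>v. f v = 0")
  case True thus ?thesis by (intro exI[of _ 0]) simp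
next
  case False
  interpret f: bounded_linear f by fact
  from False obtain a where a: "f a \<noteq> 0" by auto
  define A where "A = {v. f v = 1}"
  have a1: "(1 / f a) *\<^sub>R a \<in> A" using a by (simp add: A_def f.scale)
  define \<delta> where "\<delta> = Inf (norm ` A)"
  have bdd: "bdd_below (norm ` A)" by (intro bdd_belowI[of _ 0]) auto
  have dle: "\<delta> \<le> norm v" if "v \<in> A" for v
    unfolding \<delta>_def using bdd that by (simp add: cInf_lower)
  have d0: "0 \<le> \<delta>" unfolding \<delta>_def using a1 by (intro cInf_greatest) auto
  have "\<exists>v\<in>A. (norm v)\<^sup>2 < \<delta>\<^sup>2 + 1 / (Suc n)" for n
  proof -
    have "\<delta> < sqrt (\<delta>\<^sup>2 + 1 / Suc n)"
    proof -
      have "sqrt (\<delta>\<^sup>2) < sqrt (\<delta>\<^sup>2 + 1 / Suc n)" by (rule real_sqrt_less_mono) simp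
      thus ?thesis using d0 by simp
    qed
    moreover have "norm ` A \<noteq> {}" using a1 by blast
    ultimately obtain w where "w \<in> norm ` A" "w < sqrt (\<delta>\<^sup>2 + 1 / Suc n)"
      unfolding \<delta>_def using cInf_lessD[of "norm ` A"] by metis
    then obtain v where v: "v \<in> A" "norm v < sqrt (\<delta>\<^sup>2 + 1 / Suc n)" by auto
    hence "(norm v)\<^sup>2 < (sqrt (\<delta>\<^sup>2 + 1 / Suc n))\<^sup>2"
      by (intro power_strict_mono) auto
    hence "(norm v)\<^sup>2 < \<delta>\<^sup>2 + 1 / Suc n" by simp
    with v show ?thesis by blast
  qed
  then obtain s where s: "\<And>n. s n \<in> A" "\<And>n. (norm (s n))\<^sup>2 < \<delta>\<^sup>2 + 1 / Suc n"
    by metis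
  have par: "(norm (s n - s m))\<^sup>2 \<le> 2 / Suc n + 2 / Suc m" for n m
  proof -
    have "(1/2) *\<^sub>R (s n + s m) \<in> A" using s(1)[of n] s(1)[of m]
      by (simp add: A_def f.scale f.add)
    hence "\<delta> \<le> norm ((1/2) *\<^sub>R (s n + s m))" by (rule dle)
    hence "\<delta> \<le> norm (s n + s m) / 2" by simp
    hence "(2 * \<delta>)\<^sup>2 \<le> (norm (s n + s m))\<^sup>2" using d0
      by (intro power_mono) auto
    hence "4 * \<delta>\<^sup>2 \<le> (norm (s n + s m))\<^sup>2" by (simp add: power_mult_distrib)
    moreover have "(norm (s n - s m))\<^sup>2 + (norm (s n + s m))\<^sup>2 = 2 * (norm (s n))\<^sup>2 + 2 * (norm (s m))\<^sup>2"
      by (simp add: power2_norm_eq_inner inner_diff_left inner_diff_right inner_add_left inner_add_right inner_commute)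
    ultimately show ?thesis using s(2)[of n] s(2)[of m] by linarith
  qed
  have "Cauchy s"
  proof (rule metric_CauchyI)
    fix e :: real assume e: "e > 0"
    obtain N :: nat where N: "4 / e\<^sup>2 < N" using reals_Archimedean2 by blast
    show "\<exists>N. \<forall>m\<ge>N. \<forall>n\<ge>N. dist (s m) (s n) < e"
    proof (intro exI[of _ N] allI impI)
      fix m n assume mn: "m \<ge> N" "n \<ge> N"
      have "2 / real (Suc m) < e\<^sup>2 / 2"
      proof -
        have "4 / e\<^sup>2 < Suc m" using N mn by linarith
        hence "4 < Suc m * e\<^sup>2" using e by (simp add: field_simps)
        thus ?thesis using e by (simp add: field_simps)
      qed
      moreover have "2 / real (Suc n) < e\<^sup>2 / 2"
      proof -
        have "4 / e\<^sup>2 < Suc n" using N mn by linarith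
        hence "4 < Suc n * e\<^sup>2" using e by (simp add: field_simps)
        thus ?thesis using e by (simp add: field_simps)
      qed
      ultimately have "(norm (s m - s n))\<^sup>2 < e\<^sup>2" using par[of m n] by linarith
      thus "dist (s m) (s n) < e" using e by (simp add: dist_norm power_less_imp_less_base)
    qed
  qed
  then obtain u0 where u0: "s \<longlonglongrightarrow> u0" using Cauchy_convergent_iff convergent_def by blast
  have fu0: "f u0 = 1"
  proof -
    have "(\<lambda>n. f (s n)) \<longlonglongrightarrow> f u0" using u0 f.tendsto by blast
    moreover have "(\<lambda>n. f (s n)) = (\<lambda>n. 1)" using s(1) by (auto simp: A_def)
    ultimately have "(\<lambda>n. 1::real) \<longlonglongrightarrow> f u0" by simp
    thus ?thesis by (simp add: LIMSEQ_const_iff)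
  qed
  have nu0: "(norm u0)\<^sup>2 \<le> \<delta>\<^sup>2"
  proof -
    have "(\<lambda>n. (norm (s n))\<^sup>2) \<longlonglongrightarrow> (norm u0)\<^sup>2" by (intro tendsto_intros u0)
    moreover have "(\<lambda>n. \<delta>\<^sup>2 + 1 / Suc n) \<longlonglongrightarrow> \<delta>\<^sup>2 + 0"
      by (intro tendsto_intros LIMSEQ_inverse_real_of_nat[unfolded inverse_eq_divide])
    moreover have "\<forall>n. (norm (s n))\<^sup>2 \<le> \<delta>\<^sup>2 + 1 / Suc n" using s(2) less_imp_le by blast
    ultimately show ?thesis using LIMSEQ_le[of "\<lambda>n. (norm (s n))\<^sup>2" "(norm u0)\<^sup>2" "\<lambda>n. \<delta>\<^sup>2 + 1 / Suc n" "\<delta>\<^sup>2 + 0"]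
      by simp
  qed
  have orth: "inner u0 n = 0" if n: "f n = 0" for n
  proof -
    define c where "c = inner u0 n"
    define t where "t = - c / ((norm n)\<^sup>2 + 1)"
    have "u0 + t *\<^sub>R n \<in> A" using fu0 n by (simp add: A_def f.add f.scale)
    hence "\<delta> \<le> norm (u0 + t *\<^sub>R n)" by (rule dle)
    hence "\<delta>\<^sup>2 \<le> (norm (u0 + t *\<^sub>R n))\<^sup>2" using d0 by (simp add: power_mono)
    also have "\<dots> = (norm u0)\<^sup>2 + 2 * t * c + t\<^sup>2 * (norm n)\<^sup>2"
      by (simp only: power2_norm_eq_inner) (simp add: c_def inner_add_left inner_add_right inner_commute power2_eq_square algebra_simps)
    finally have "0 \<le> 2 * t * c + t\<^sup>2 * (norm n)\<^sup>2" using nu0 by linarith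
    define D where "D = (norm n)\<^sup>2 + 1"
    have Dp: "D > 0" unfolding D_def by (simp add: add_nonneg_pos)
    have eq: "D\<^sup>2 * (2 * t * c + t\<^sup>2 * (norm n)\<^sup>2) = - (c\<^sup>2 * ((norm n)\<^sup>2 + 2))"
    proof -
      have tD: "t * D = - c" using Dp by (simp add: t_def D_def)
      have "D\<^sup>2 * (2 * t * c + t\<^sup>2 * (norm n)\<^sup>2) = 2*c*(t*D)*D + (t*D)\<^sup>2*(norm n)\<^sup>2"
        by (simp add: power2_eq_square algebra_simps)
      also have "\<dots> = - (c\<^sup>2 * ((norm n)\<^sup>2 + 2))" unfolding tD
        by (simp add: D_def power2_eq_square algebra_simps)
      finally show ?thesis .
    qed
    have "0 \<le> D\<^sup>2 * (2 * t * c + t\<^sup>2 * (norm n)\<^sup>2)"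
      using \<open>0 \<le> 2 * t * c + t\<^sup>2 * (norm n)\<^sup>2\<close> by simp
    hence "c\<^sup>2 * ((norm n)\<^sup>2 + 2) \<le> 0" using eq by linarith
    moreover have "(norm n)\<^sup>2 + 2 > 0" by (simp add: add_nonneg_pos)
    ultimately have "c\<^sup>2 \<le> 0" by (simp add: mult_le_0_iff)
    thus ?thesis unfolding c_def by simp
  qed
  have un: "u0 \<noteq> 0" using fu0 by auto
  show ?thesis
  proof (intro exI[of _ "(1 / (norm u0)\<^sup>2) *\<^sub>R u0"] allI)
    fix v
    have "f (v - f v *\<^sub>R u0) = 0" by (simp add: f.diff f.scale fu0)
    hence "inner u0 (v - f v *\<^sub>R u0) = 0" by (rule orth)
    hence "inner v u0 = f v * (norm u0)\<^sup>2"
      by (simp add: inner_diff_right power2_norm_eq_inner inner_commute)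
    thus "f v = inner v ((1 / (norm u0)\<^sup>2) *\<^sub>R u0)" using un by simp
  qed
qed



lemma adjoint_ex:
  fixes A :: "'h::{real_inner,complete_space} \<Rightarrow>\<^sub>L 'h"
  shows "\<exists>u. \<forall>v. inner (A v) \<eta> = inner v u"
proof -
  have "bounded_linear (\<lambda>v. inner (A v) \<eta>)"
    by (intro bounded_linear_compose[OF bounded_linear_inner_left] blinfun.bounded_linear_right)
  thus ?thesis by (rule riesz)
qed

lemma form_rep:
  fixes Bf :: "'h::{real_inner,complete_space} \<Rightarrow> 'h \<Rightarrow> real"
  assumes add1: "\<And>a b v. Bf (a + b) v = Bf a v + Bf b v"
    and sc1: "\<And>c a v. Bf (c *\<^sub>R a) v = c * Bf a v"
    and add2: "\<And>a v w. Bf a (v + w) = Bf a v + Bf a w"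
    and sc2: "\<And>c a v. Bf a (c *\<^sub>R v) = c * Bf a v"
    and bd: "\<And>a v. \<bar>Bf a v\<bar> \<le> C * norm a * norm v"
  shows "\<exists>y :: 'h \<Rightarrow>\<^sub>L 'h. \<forall>u v. inner (y u) v = Bf u v"
proof -
  have "\<exists>w. \<forall>v. Bf u v = inner v w" for u
  proof (rule riesz)
    show "bounded_linear (Bf u)"
    proof
      show "Bf u (x + y) = Bf u x + Bf u y" for x y by (rule add2)
      show "Bf u (r *\<^sub>R x) = r *\<^sub>R Bf u x" for r x by (simp add: sc2)
      show "\<exists>K. \<forall>x. norm (Bf u x) \<le> norm x * K"
        using bd[of u] by (intro exI[of _ "C * norm u"]) (auto simp: algebra_simps)
    qed
  qed
  then obtain g where g: "\<And>u v. Bf u v = inner v (g u)" by metis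
  have gadd: "g (a + b) = g a + g b" for a b
    by (rule vec_eq_inner) (metis add1 g inner_add_left inner_commute)
  have gsc: "g (c *\<^sub>R a) = c *\<^sub>R g a" for c a
    by (rule vec_eq_inner) (metis sc1 g inner_scaleR_left inner_commute)
  have gb: "norm (g u) \<le> \<bar>C\<bar> * norm u" for u
  proof -
    have "(norm (g u))\<^sup>2 = Bf u (g u)" by (simp add: g power2_norm_eq_inner)
    also have "\<dots> \<le> \<bar>C\<bar> * norm u * norm (g u)" using bd[of u "g u"]
      by (smt (verit) mult_right_mono mult_nonneg_nonneg norm_ge_zero abs_ge_self)
    finally have "norm (g u) * norm (g u) \<le> (\<bar>C\<bar> * norm u) * norm (g u)" by (simp add: power2_eq_square)
    thus ?thesis by (cases "norm (g u) = 0") (auto simp: mult_le_cancel_right)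
  qed
  have bl: "bounded_linear g"
  proof
    show "g (x + y) = g x + g y" for x y by (rule gadd)
    show "g (r *\<^sub>R x) = r *\<^sub>R g x" for r x by (rule gsc)
    show "\<exists>K. \<forall>x. norm (g x) \<le> norm x * K"
      using gb by (intro exI[of _ "\<bar>C\<bar>"]) (auto simp: algebra_simps)
  qed
  show ?thesis
    by (intro exI[of _ "Blinfun g"]) (simp add: bounded_linear_Blinfun_apply[OF bl] g inner_commute)
qed

lemma J_adj:
  assumes "complex_structure J"
  shows "inner (blinfun_apply J a) b = - inner a (J b)"
proof -
  have "inner (J a) b = inner (J (J a)) (J b)" using assms unfolding complex_structure_def by metis
  also have "J (J a) = - a" using assms by (simp add: complex_structure_def)
  hence "inner (J (J a)) (J b) = - inner a (J b)" by simp
  ultimately show ?thesis by simp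
qed

lemma comm_iff: "a o\<^sub>L b = b o\<^sub>L a \<longleftrightarrow> (\<forall>v. a (b v) = b (a v))"
  by (metis blinfun_apply_blinfun_compose blinfun_eqI)

lemma commutant_diff:
  assumes "x \<in> commutant J S" "y \<in> commutant J S" shows "x - y \<in> commutant J S"
  using assms unfolding commutant_def bounded_op_def comm_iff
  by (simp add: blinfun.diff_left blinfun.diff_right)

lemma commutant_scale:
  assumes "x \<in> commutant J S" shows "c *\<^sub>R x \<in> commutant J S"
  using assms unfolding commutant_def bounded_op_def comm_iff
  by (simp add: blinfun.scaleR_left blinfun.scaleR_right)

lemma commutant_zero: "0 \<in> commutant J S"
  unfolding commutant_def bounded_op_def comm_iff by simp

lemma vN_diff: "von_neumann_algebra J M \<Longrightarrow> x \<in> M \<Longrightarrow> y \<in> M \<Longrightarrow> x - y \<in> M"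
  unfolding von_neumann_algebra_def by (metis commutant_diff)
lemma vN_scale: "von_neumann_algebra J M \<Longrightarrow> x \<in> M \<Longrightarrow> c *\<^sub>R x \<in> M"
  unfolding von_neumann_algebra_def by (metis commutant_scale)
lemma vN_zero: "von_neumann_algebra J M \<Longrightarrow> 0 \<in> M"
  unfolding von_neumann_algebra_def by (metis commutant_zero)



lemma inner_blinfun_bound:
  fixes Y :: "'h::real_inner \<Rightarrow>\<^sub>L 'h"
  shows "\<bar>inner (Y u) v\<bar> \<le> norm Y * norm u * norm v"
proof -
  have "\<bar>inner (Y u) v\<bar> \<le> norm (Y u) * norm v" by (rule Cauchy_Schwarz_ineq2)
  also have "\<dots> \<le> norm Y * norm u * norm v" by (intro mult_right_mono norm_blinfun) auto
  finally show ?thesis .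
qed

lemma inner_blinfun_boundR:
  fixes Y :: "'h::real_inner \<Rightarrow>\<^sub>L 'h"
  assumes "norm Y \<le> R"
  shows "\<bar>inner (Y u) v\<bar> \<le> R * norm u * norm v"
  using inner_blinfun_bound[of Y u v] assms
  by (smt (verit) mult_right_mono norm_ge_zero mult_nonneg_nonneg)

lemma conv_approx:
  fixes a :: "nat \<Rightarrow> real"
  assumes "\<And>e. e > 0 \<Longrightarrow> \<exists>b. convergent b \<and> (\<forall>m. \<bar>a m - b m\<bar> \<le> e)"
  shows "convergent a"
proof -
  have "Cauchy a"
  proof (rule metric_CauchyI)
    fix e :: real assume e: "e > 0"
    then obtain b where b: "convergent b" "\<And>m. \<bar>a m - b m\<bar> \<le> e/4"
      using assms[of "e/4"] by auto
    from b(1) have "Cauchy b" by (simp add: Cauchy_convergent_iff)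
    then obtain N where N: "\<And>m n. m \<ge> N \<Longrightarrow> n \<ge> N \<Longrightarrow> dist (b m) (b n) < e/4"
      using e by (meson metric_CauchyD zero_less_divide_iff zero_less_numeral)
    show "\<exists>N. \<forall>m\<ge>N. \<forall>n\<ge>N. dist (a m) (a n) < e"
    proof (intro exI[of _ N] allI impI)
      fix m n assume "m \<ge> N" "n \<ge> N"
      with N have "\<bar>b m - b n\<bar> < e/4" by (simp add: dist_real_def)
      with b(2)[of m] b(2)[of n] show "dist (a m) (a n) < e" unfolding dist_real_def by arith
    qed
  qed
  thus ?thesis by (simp add: Cauchy_convergent_iff)
qed

lemma wot_subseq:
  fixes y :: "nat \<Rightarrow> 'h::{real_inner,complete_space} \<Rightarrow>\<^sub>L 'h"
  assumes sep: "separable_space (euclidean :: 'h topology)" and bd: "\<And>n. norm (y n) \<le> R"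
  shows "\<exists>r (z::'h \<Rightarrow>\<^sub>L 'h). strict_mono r \<and> (\<forall>u v. (\<lambda>n. inner (y (r n) u) v) \<longlonglongrightarrow> inner (z u) v)"
proof -
  have R0: "0 \<le> R" using bd[of 0] norm_ge_zero order_trans by blast
  from sep obtain C where C: "countable C" "closure C = (UNIV :: 'h set)"
    unfolding separable_space_def by auto
  have Cne: "C \<noteq> {}" using C(2) by auto
  define d where "d = from_nat_into C"
  have dC: "range d = C" using Cne C(1) by (simp add: d_def)
  have dense: "\<exists>i. norm (d i - x) < e" if e0: "e > 0" for x e
  proof -
    have "x \<in> closure C" using C(2) by simp
    hence "\<forall>\<epsilon>>0. \<exists>y\<in>C. dist y x < \<epsilon>" by (simp only: closure_approachable)
    then obtain c where "c \<in> C" "dist c x < e" using e0 by blast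
    thus ?thesis using dC by (auto simp: dist_norm)
  qed
  define g where "g k m = inner (y m (d (fst (prod_decode k)))) (d (snd (prod_decode k)))" for k m
  have gb: "\<bar>g k m\<bar> \<le> R * norm (d (fst (prod_decode k))) * norm (d (snd (prod_decode k)))" for k m
    unfolding g_def by (rule inner_blinfun_boundR[OF bd])
  interpret S: subseqs "\<lambda>k s. convergent (\<lambda>m. g k (s m))"
  proof
    fix k and s :: "nat \<Rightarrow> nat" assume "strict_mono s"
    obtain f where f: "strict_mono f" "monoseq (\<lambda>n. g k (s (f n)))"
      using seq_monosub[of "\<lambda>m. g k (s m)"] by auto
    have "Bseq (\<lambda>n. g k (s (f n)))" using gb by (intro BseqI') auto
    hence "convergent (\<lambda>n. g k (s (f n)))" using f(2) Bseq_monoseq_convergent by blast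
    thus "\<exists>r'. strict_mono r' \<and> convergent (\<lambda>m. g k ((s \<circ> r') m))" using f(1) by auto
  qed
  define r where "r = S.diagseq"
  have rmono: "strict_mono r" unfolding r_def by (rule S.subseq_diagseq)
  have convg: "convergent (\<lambda>m. g k (r m))" for k
  proof -
    have "convergent (\<lambda>m. g k ((S.diagseq \<circ> (+) (Suc k)) m))"
    proof (rule S.diagseq_holds)
      fix r :: "nat \<Rightarrow> nat" and s n assume "strict_mono r" "convergent (\<lambda>m. g n (s m))"
      thus "convergent (\<lambda>m. g n ((s \<circ> r) m))"
        using convergent_subseq_convergent[of "\<lambda>m. g n (s m)" r] by (simp add: o_def)
    qed
    then obtain l where "(\<lambda>m. g k (r (m + Suc k))) \<longlonglongrightarrow> l"
      by (auto simp: convergent_def r_def add.commute)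
    hence "(\<lambda>m. g k (r m)) \<longlonglongrightarrow> l" by (rule LIMSEQ_offset)
    thus ?thesis by (auto simp: convergent_def)
  qed
  have conv_dd: "convergent (\<lambda>m. inner (y (r m) (d i)) (d j))" for i j
    using convg[of "prod_encode (i, j)"] by (simp add: g_def)
  have conv_ud: "convergent (\<lambda>m. inner (y (r m) u) (d j))" for u j
  proof (rule conv_approx)
    fix e :: real assume e: "e > 0"
    define \<delta> where "\<delta> = e / ((R + 1) * (norm (d j) + 1))"
    have \<delta>: "\<delta> > 0" unfolding \<delta>_def using e R0 by (simp add: add_nonneg_pos)
    obtain i where i: "norm (d i - u) < \<delta>" using dense[OF \<delta>] by blast
    show "\<exists>b. convergent b \<and> (\<forall>m. \<bar>inner (y (r m) u) (d j) - b m\<bar> \<le> e)"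
    proof (intro exI[of _ "\<lambda>m. inner (y (r m) (d i)) (d j)"] conjI allI conv_dd)
      fix m
      have "\<bar>inner (y (r m) u) (d j) - inner (y (r m) (d i)) (d j)\<bar> = \<bar>inner (y (r m) (u - d i)) (d j)\<bar>"
        by (simp add: blinfun.diff_right inner_diff_left)
      also have "\<dots> \<le> R * norm (u - d i) * norm (d j)" by (rule inner_blinfun_boundR[OF bd])
      also have "\<dots> \<le> (R + 1) * \<delta> * (norm (d j) + 1)"
        using i R0 \<delta> by (intro mult_mono) (auto simp: norm_minus_commute)
      also have "\<dots> = \<delta> * ((R + 1) * (norm (d j) + 1))" by (simp add: algebra_simps)
      also have "\<dots> = e" unfolding \<delta>_def using R0
        by (simp add: add_nonneg_pos mult_pos_pos less_imp_neq[symmetric])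
      finally show "\<bar>inner (y (r m) u) (d j) - inner (y (r m) (d i)) (d j)\<bar> \<le> e" .
    qed
  qed
  have conv_uv: "convergent (\<lambda>m. inner (y (r m) u) v)" for u v
  proof (rule conv_approx)
    fix e :: real assume e: "e > 0"
    define \<delta> where "\<delta> = e / ((R + 1) * (norm u + 1))"
    have \<delta>: "\<delta> > 0" unfolding \<delta>_def using e R0 by (simp add: add_nonneg_pos)
    obtain j where j: "norm (d j - v) < \<delta>" using dense[OF \<delta>] by blast
    show "\<exists>b. convergent b \<and> (\<forall>m. \<bar>inner (y (r m) u) v - b m\<bar> \<le> e)"
    proof (intro exI[of _ "\<lambda>m. inner (y (r m) u) (d j)"] conjI allI conv_ud)
      fix m
      have "\<bar>inner (y (r m) u) v - inner (y (r m) u) (d j)\<bar> = \<bar>inner (y (r m) u) (v - d j)\<bar>"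
        by (simp add: inner_diff_right)
      also have "\<dots> \<le> R * norm u * norm (v - d j)" by (rule inner_blinfun_boundR[OF bd])
      also have "\<dots> \<le> (R + 1) * (norm u + 1) * \<delta>"
        using j R0 \<delta> by (intro mult_mono) (auto simp: norm_minus_commute)
      also have "\<dots> = \<delta> * ((R + 1) * (norm u + 1))" by (simp add: algebra_simps)
      also have "\<dots> = e" unfolding \<delta>_def using R0
        by (simp add: add_nonneg_pos mult_pos_pos less_imp_neq[symmetric])
      finally show "\<bar>inner (y (r m) u) v - inner (y (r m) u) (d j)\<bar> \<le> e" .
    qed
  qed
  define Bf where "Bf u v = lim (\<lambda>m. inner (y (r m) u) v)" for u v
  have BfL: "(\<lambda>m. inner (y (r m) u) v) \<longlonglongrightarrow> Bf u v" for u v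
    unfolding Bf_def using conv_uv convergent_LIMSEQ_iff by blast
  have "\<exists>z :: 'h \<Rightarrow>\<^sub>L 'h. \<forall>u v. inner (z u) v = Bf u v"
  proof (rule form_rep)
    show "Bf (a + b) v = Bf a v + Bf b v" for a b v
      using BfL[of "a+b" v] tendsto_add[OF BfL[of a v] BfL[of b v]]
      by (simp add: blinfun.add_right inner_add_left LIMSEQ_unique)
    show "Bf (c *\<^sub>R a) v = c * Bf a v" for c a v
      using BfL[of "c *\<^sub>R a" v] tendsto_mult[OF tendsto_const[of c] BfL[of a v]]
      by (simp add: blinfun.scaleR_right LIMSEQ_unique)
    show "Bf a (v + w) = Bf a v + Bf a w" for a v w
      using BfL[of a "v+w"] tendsto_add[OF BfL[of a v] BfL[of a w]]
      by (simp add: inner_add_right LIMSEQ_unique)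
    show "Bf a (c *\<^sub>R v) = c * Bf a v" for c a v
      using BfL[of a "c *\<^sub>R v"] tendsto_mult[OF tendsto_const[of c] BfL[of a v]]
      by (simp add: LIMSEQ_unique)
    show "\<bar>Bf a v\<bar> \<le> R * norm a * norm v" for a v
      using tendsto_rabs[OF BfL[of a v]] inner_blinfun_boundR[OF bd]
      by (intro LIMSEQ_le_const2[of "\<lambda>m. \<bar>inner (y (r m) a) v\<bar>"]) auto
  qed
  then obtain z :: "'h \<Rightarrow>\<^sub>L 'h" where z: "\<And>u v. inner (z u) v = Bf u v" by blast
  show ?thesis using rmono BfL z by (intro exI[of _ r] exI[of _ z]) auto
qed



lemma wot_in_M:
  assumes cs: "complex_structure J" and vN: "von_neumann_algebra J M" and yM: "\<And>n. y n \<in> M"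
    and lim: "\<And>u v. (\<lambda>n. inner (y n u) v) \<longlonglongrightarrow> inner (blinfun_apply z u) v"
  shows "z \<in> M"
proof -
  have Mb: "\<And>x. x \<in> M \<Longrightarrow> bounded_op J x" using vN unfolding von_neumann_algebra_def by auto
  have Meq: "commutant J (commutant J M) = M" using vN by (simp add: von_neumann_algebra_def)
  have bz: "bounded_op J z" unfolding bounded_op_def comm_iff
  proof
    fix u show "J (z u) = z (J u)"
    proof (rule vec_eq_inner)
      fix w
      have "(\<lambda>n. - inner (y n u) (J w)) \<longlonglongrightarrow> - inner (z u) (J w)" by (intro tendsto_minus lim)
      moreover have "(\<lambda>n. - inner (y n u) (J w)) = (\<lambda>n. inner (y n (J u)) w)"
      proof
        fix n
        have "J (y n u) = y n (J u)" using Mb[OF yM[of n]] unfolding bounded_op_def comm_iff by auto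
        thus "- inner (y n u) (J w) = inner (y n (J u)) w" using J_adj[OF cs, of "y n u" w] by simp
      qed
      ultimately have "(\<lambda>n. inner (y n (J u)) w) \<longlonglongrightarrow> - inner (z u) (J w)" by simp
      hence "inner (z (J u)) w = - inner (z u) (J w)" using lim LIMSEQ_unique by blast
      thus "inner (J (z u)) w = inner (z (J u)) w" using J_adj[OF cs, of "z u" w] by simp
    qed
  qed
  have cz: "x o\<^sub>L z = z o\<^sub>L x" if x: "x \<in> commutant J M" for x
    unfolding comm_iff
  proof
    fix u show "x (z u) = z (x u)"
    proof (rule vec_eq_inner)
      fix w
      obtain p where p: "\<And>v. inner (x v) w = inner v p" using adjoint_ex[of x w] by blast
      have "(\<lambda>n. inner (y n u) p) \<longlonglongrightarrow> inner (z u) p" by (rule lim)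
      moreover have "(\<lambda>n. inner (y n u) p) = (\<lambda>n. inner (y n (x u)) w)"
      proof
        fix n
        have "y n o\<^sub>L x = x o\<^sub>L y n" using x yM[of n] unfolding commutant_def by auto
        hence "y n (x u) = x (y n u)" unfolding comm_iff by auto
        thus "inner (y n u) p = inner (y n (x u)) w" using p[of "y n u"] by simp
      qed
      ultimately have "(\<lambda>n. inner (y n (x u)) w) \<longlonglongrightarrow> inner (z u) p" by simp
      hence "inner (z (x u)) w = inner (z u) p" using lim LIMSEQ_unique by blast
      thus "inner (x (z u)) w = inner (z (x u)) w" using p[of "z u"] by simp
    qed
  qed
  have "z \<in> commutant J (commutant J M)" unfolding commutant_def[of J "commutant J M"] using bz cz by blast
  thus ?thesis using Meq by simp
qed

lemma normal_tendsto:
  fixes y :: "nat \<Rightarrow> 'h::{real_inner,complete_space} \<Rightarrow>\<^sub>L 'h"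
  assumes phi: "normal_functional J \<phi>" and bd: "\<And>n. norm (y n) \<le> R"
    and lim: "\<And>u v. (\<lambda>n. inner (y n u) v) \<longlonglongrightarrow> inner (blinfun_apply z u) v"
  shows "(\<lambda>n. \<phi> (y n)) \<longlonglongrightarrow> \<phi> z"
proof -
  obtain \<xi> \<eta> where s: "summable (\<lambda>n. (norm (\<xi> n))\<^sup>2)" "summable (\<lambda>n. (norm (\<eta> n))\<^sup>2)"
    and \<phi>: "\<phi> = (\<lambda>x. \<Sum>n. inner (x (\<xi> n)) (\<eta> n))"
    using phi unfolding normal_functional_def by blast
  have R0: "0 \<le> R" using bd[of 0] norm_ge_zero order_trans by blast
  have "eventually (\<lambda>n. summable (\<lambda>k. norm (inner (y n (\<xi> k)) (\<eta> k)))) sequentially \<and>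
        summable (\<lambda>n. norm (inner (z (\<xi> n)) (\<eta> n))) \<and>
        ((\<lambda>n. \<Sum>k. inner (y n (\<xi> k)) (\<eta> k)) \<longlonglongrightarrow> (\<Sum>k. inner (z (\<xi> k)) (\<eta> k)))"
  proof (rule tannerys_theorem[where M = "\<lambda>k. R * ((norm (\<xi> k))\<^sup>2 + (norm (\<eta> k))\<^sup>2)"])
    show "(\<lambda>n. inner (y n (\<xi> k)) (\<eta> k)) \<longlonglongrightarrow> inner (z (\<xi> k)) (\<eta> k)" for k by (rule lim)
    show "eventually (\<lambda>(k,n). norm (inner (y n (\<xi> k)) (\<eta> k)) \<le> R * ((norm (\<xi> k))\<^sup>2 + (norm (\<eta> k))\<^sup>2))
      (at_top \<times>\<^sub>F sequentially)"
    proof (rule always_eventually, clarify)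
      fix k n
      have "\<bar>inner (y n (\<xi> k)) (\<eta> k)\<bar> \<le> R * norm (\<xi> k) * norm (\<eta> k)" by (rule inner_blinfun_boundR[OF bd])
      also have "\<dots> \<le> R * ((norm (\<xi> k))\<^sup>2 + (norm (\<eta> k))\<^sup>2)"
      proof -
        have "0 \<le> (norm (\<xi> k) - norm (\<eta> k))\<^sup>2" by simp
        hence "2 * (norm (\<xi> k) * norm (\<eta> k)) \<le> (norm (\<xi> k))\<^sup>2 + (norm (\<eta> k))\<^sup>2"
          by (simp add: power2_eq_square algebra_simps)
        moreover have "0 \<le> norm (\<xi> k) * norm (\<eta> k)" by simp
        ultimately have "norm (\<xi> k) * norm (\<eta> k) \<le> (norm (\<xi> k))\<^sup>2 + (norm (\<eta> k))\<^sup>2" by linarith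
        thus ?thesis using R0 by (simp add: mult.assoc mult_left_mono)
      qed
      finally show "norm (inner (y n (\<xi> k)) (\<eta> k)) \<le> R * ((norm (\<xi> k))\<^sup>2 + (norm (\<eta> k))\<^sup>2)" by simp
    qed
    show "summable (\<lambda>k. R * ((norm (\<xi> k))\<^sup>2 + (norm (\<eta> k))\<^sup>2))" using s by (intro summable_mult summable_add)
    show "sequentially \<noteq> bot" by simp
  qed
  thus ?thesis unfolding \<phi> by simp
qed

lemma single_normal: "normal_functional J (\<lambda>y. inner (blinfun_apply y a) b)"
proof -
  define \<xi> where "\<xi> n = (if n = 0 then a else 0)" for n :: nat
  define \<eta> where "\<eta> n = (if n = 0 then b else 0)" for n :: nat
  have s1: "summable (\<lambda>n. (norm (\<xi> n))\<^sup>2)"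
  proof -
    have "(\<lambda>n. (norm (\<xi> n))\<^sup>2) = (\<lambda>n. if n = 0 then (norm a)\<^sup>2 else 0)" by (auto simp: \<xi>_def)
    thus ?thesis using sums_single[of 0 "\<lambda>_. (norm a)\<^sup>2"] sums_summable by metis
  qed
  have s2: "summable (\<lambda>n. (norm (\<eta> n))\<^sup>2)"
  proof -
    have "(\<lambda>n. (norm (\<eta> n))\<^sup>2) = (\<lambda>n. if n = 0 then (norm b)\<^sup>2 else 0)" by (auto simp: \<eta>_def)
    thus ?thesis using sums_single[of 0 "\<lambda>_. (norm b)\<^sup>2"] sums_summable by metis
  qed
  have "(\<lambda>y. inner (blinfun_apply y a) b) = (\<lambda>y. \<Sum>n. inner (y (\<xi> n)) (\<eta> n))"
  proof
    fix y :: "'a \<Rightarrow>\<^sub>L 'a"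
    have "(\<lambda>n. inner (y (\<xi> n)) (\<eta> n)) = (\<lambda>n. if n = 0 then inner (y a) b else 0)"
      by (auto simp: \<xi>_def \<eta>_def)
    hence "(\<lambda>n. inner (y (\<xi> n)) (\<eta> n)) sums inner (y a) b"
      using sums_single[of 0 "\<lambda>_. inner (y a) b"] by simp
    thus "inner (y a) b = (\<Sum>n. inner (y (\<xi> n)) (\<eta> n))" by (simp add: sums_unique)
  qed
  thus ?thesis unfolding normal_functional_def using s1 s2 by blast
qed

lemma sub_gen_open:
  assumes loc: "\<And>S x. S \<in> \<S> \<Longrightarrow> x \<in> S \<Longrightarrow> x \<in> B \<Longrightarrow> \<exists>W. openin Y W \<and> x \<in> W \<and> W \<inter> B \<subseteq> S"
    and A: "openin (subtopology (topology_generated_by \<S>) B) A"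
  shows "openin (subtopology Y B) A"
proof -
  from A obtain S where S: "openin (topology_generated_by \<S>) S" "A = S \<inter> B"
    by (auto simp: openin_subtopology)
  from S(1) have "generate_topology_on \<S> S" by (rule openin_topology_generated_by)
  hence "openin (subtopology Y B) (S \<inter> B)"
  proof (induction rule: generate_topology_on.induct)
    case Empty thus ?case by simp
  next
    case (Int a b)
    have "a \<inter> b \<inter> B = (a \<inter> B) \<inter> (b \<inter> B)" by blast
    thus ?case using Int by (simp add: openin_Int)
  next
    case (UN K)
    have eq: "\<Union>K \<inter> B = \<Union>((\<lambda>k. k \<inter> B) ` K)" by blast
    have "openin (subtopology Y B) (\<Union>((\<lambda>k. k \<inter> B) ` K))" using UN.IH by (intro openin_Union) auto
    with eq show ?case by simp
  next
    case (Basis s)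
    show ?case unfolding openin_subopen[of _ "s \<inter> B"]
    proof
      fix x assume x: "x \<in> s \<inter> B"
      then obtain W where W: "openin Y W" "x \<in> W" "W \<inter> B \<subseteq> s" using loc[OF Basis] by blast
      show "\<exists>T. openin (subtopology Y B) T \<and> x \<in> T \<and> T \<subseteq> s \<inter> B"
        using W x by (intro exI[of _ "W \<inter> B"]) (auto intro: openin_subtopology_Int)
    qed
  qed
  thus ?thesis using S(2) by simp
qed

lemma norm_J_comb:
  assumes cs: "complex_structure J"
  shows "norm (a *\<^sub>R w + b *\<^sub>R blinfun_apply J w) = sqrt (a\<^sup>2 + b\<^sup>2) * norm w"
proof -
  have JJ: "inner (J w) (J w) = inner w w" using cs unfolding complex_structure_def by blast
  have wJ: "inner w (J w) = 0"
  proof -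
    have "inner (J w) w = - inner w (J w)" by (rule J_adj[OF cs])
    thus ?thesis by (simp add: inner_commute)
  qed
  have "(norm (a *\<^sub>R w + b *\<^sub>R J w))\<^sup>2 = (a\<^sup>2 + b\<^sup>2) * (norm w)\<^sup>2"
    by (simp only: power2_norm_eq_inner)
       (simp add: inner_add_left inner_add_right JJ wJ inner_commute[of "J w" w] power2_eq_square algebra_simps)
  hence "norm (a *\<^sub>R w + b *\<^sub>R J w) = sqrt ((a\<^sup>2 + b\<^sup>2) * (norm w)\<^sup>2)"
    by (metis norm_ge_zero real_sqrt_unique)
  thus ?thesis by (simp add: real_sqrt_mult)
qed



lemma partI:
  fixes J :: "'h::{real_inner,complete_space} \<Rightarrow>\<^sub>L 'h"
    and M :: "('h \<Rightarrow>\<^sub>L 'h) set" and \<Omega> :: 'h and T :: "'h \<Rightarrow>\<^sub>L 'h"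
  assumes vN: "von_neumann_algebra J M"
    and cpt: "compact (closure {T (blinfun_apply x \<Omega>) | x. x \<in> M \<and> norm x \<le> 1})"
    and BM: "B \<subseteq> M" and bB: "bounded B" and x0: "x0 \<in> B"
    and lt: "norm (T ((x0 - x) \<Omega>)) < r"
  shows "\<exists>W. openin (sigma_weak_topology J) W \<and> x0 \<in> W \<and> (\<forall>y\<in>W \<inter> B. norm (T ((y - x) \<Omega>)) < r)"
proof -
  obtain R where R: "R > 0" "\<And>y. y \<in> B \<Longrightarrow> norm y \<le> R" using bB unfolding bounded_pos by blast
  define \<epsilon> where "\<epsilon> = r - norm (T ((x0 - x) \<Omega>))"
  have \<epsilon>: "\<epsilon> > 0" using lt by (simp add: \<epsilon>_def)
  define K where "K = closure {T (blinfun_apply x \<Omega>) | x. x \<in> M \<and> norm x \<le> 1}"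
  define K2 where "K2 = (\<lambda>w. (2 * R) *\<^sub>R w) ` K"
  have K2c: "compact K2" unfolding K2_def K_def using cpt by (rule compact_scaling)
  define C where "C = K2 \<inter> - ball 0 \<epsilon>"
  have Cc: "compact C" unfolding C_def using K2c by (intro compact_Int_closed) auto
  have inK2: "T ((y - x0) \<Omega>) \<in> K2" if y: "y \<in> B" for y
  proof -
    define z where "z = (1 / (2 * R)) *\<^sub>R (y - x0)"
    have zM: "z \<in> M" unfolding z_def using vN BM y x0 by (intro vN_scale vN_diff) auto
    have "norm (y - x0) \<le> 2 * R" using R(2)[OF y] R(2)[OF x0] norm_triangle_ineq4[of y x0] by linarith
    moreover have "norm z = norm (y - x0) / (2 * R)" unfolding z_def using R(1)
      by (simp only: norm_scaleR) simp
    ultimately have zn: "norm z \<le> 1" using R(1) by (simp add: divide_le_eq)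
    have "T (z \<Omega>) \<in> K" unfolding K_def using zM zn by (intro set_mp[OF closure_subset]) auto
    moreover have "T ((y - x0) \<Omega>) = (2 * R) *\<^sub>R T (z \<Omega>)"
      unfolding z_def using R(1) by (simp add: blinfun.scaleR_left blinfun.scaleR_right)
    ultimately show ?thesis unfolding K2_def by blast
  qed
  define Op where "Op c = {w. \<epsilon>\<^sup>2 / 2 < inner w c}" for c :: 'h
  have Oo: "open (Op c)" for c unfolding Op_def by (intro open_Collect_less continuous_intros)
  have Cov: "C \<subseteq> (\<Union>c\<in>C. Op c)"
  proof
    fix w assume w: "w \<in> C"
    hence "\<epsilon> \<le> norm w" by (auto simp: C_def)
    hence "\<epsilon>\<^sup>2 \<le> (norm w)\<^sup>2" using \<epsilon> by (intro power_mono) auto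
    hence "\<epsilon>\<^sup>2 \<le> inner w w" by (simp add: power2_norm_eq_inner)
    moreover have "0 < \<epsilon>\<^sup>2" using \<epsilon> by simp
    ultimately have "\<epsilon>\<^sup>2 / 2 < inner w w" by linarith
    thus "w \<in> (\<Union>c\<in>C. Op c)" using w by (auto simp: Op_def)
  qed
  obtain F where F: "F \<subseteq> C" "finite F" "C \<subseteq> (\<Union>c\<in>F. Op c)"
    using compactE_image[OF Cc Oo Cov] by metis
  have "\<forall>c. \<exists>u. \<forall>v. inner (T v) c = inner v u" using adjoint_ex by blast
  then obtain u where u: "\<And>c v. inner (T v) c = inner v (u c)" by metis
  define \<phi> where "\<phi> c y = inner (blinfun_apply y \<Omega>) (u c)" for c y
  define V where "V c = {y. \<phi> c y \<in> {..< \<phi> c x0 + \<epsilon>\<^sup>2 / 2}}" for c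
  have Vo: "openin (sigma_weak_topology J) (V c)" for c
    unfolding sigma_weak_topology_def V_def
  proof (rule topology_generated_by_Basis)
    show "{y. \<phi> c y \<in> {..< \<phi> c x0 + \<epsilon>\<^sup>2 / 2}} \<in> {{x. \<phi> x \<in> U} | \<phi> U. normal_functional J \<phi> \<and> open U}"
      unfolding \<phi>_def using single_normal[of J \<Omega> "u c"]
      by (intro CollectI exI[of _ "\<lambda>y. inner (blinfun_apply y \<Omega>) (u c)"] exI[of _ "{..< \<phi> c x0 + \<epsilon>\<^sup>2 / 2}"]) (auto simp: \<phi>_def)
  qed
  have top: "topspace (sigma_weak_topology J) = UNIV"
  proof -
    have "UNIV \<in> {{x. \<phi> x \<in> U} | \<phi> U. normal_functional J \<phi> \<and> open U}"
      using single_normal[of J 0 0] by (intro CollectI exI[of _ "\<lambda>y. inner (blinfun_apply y 0) 0"] exI[of _ UNIV]) auto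
    thus ?thesis unfolding sigma_weak_topology_def topology_generated_by_topspace by blast
  qed
  define W where "W = \<Inter> (insert UNIV (V ` F))"
  have Wo: "openin (sigma_weak_topology J) W" unfolding W_def
    using F(2) Vo openin_topspace[of "sigma_weak_topology J"] top by (intro openin_Inter) auto
  have x0W: "x0 \<in> W" unfolding W_def V_def using \<epsilon> by auto
  have "norm (T ((y - x) \<Omega>)) < r" if y: "y \<in> W \<inter> B" for y
  proof -
    define w where "w = T ((y - x0) \<Omega>)"
    have "w \<notin> Op c" if c: "c \<in> F" for c
    proof -
      have "y \<in> V c" using y c unfolding W_def by auto
      hence "\<phi> c y < \<phi> c x0 + \<epsilon>\<^sup>2 / 2" by (simp add: V_def)
      moreover have "inner w c = \<phi> c y - \<phi> c x0"
        unfolding w_def \<phi>_def u by (simp add: blinfun.diff_left inner_diff_left)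
      ultimately show ?thesis by (simp add: Op_def)
    qed
    hence "w \<notin> C" using F(3) by blast
    moreover have "w \<in> K2" unfolding w_def using y by (intro inK2) auto
    ultimately have wn: "norm w < \<epsilon>" by (simp add: C_def)
    have "T ((y - x) \<Omega>) = w + T ((x0 - x) \<Omega>)"
      unfolding w_def by (simp add: blinfun.diff_left blinfun.diff_right)
    hence "norm (T ((y - x) \<Omega>)) \<le> norm w + norm (T ((x0 - x) \<Omega>))" by (simp add: norm_triangle_ineq)
    thus ?thesis using wn by (simp add: \<epsilon>_def)
  qed
  thus ?thesis using Wo x0W by blast
qed



lemma partII:
  fixes J :: "'h::{real_inner,complete_space} \<Rightarrow>\<^sub>L 'h"
    and M B :: "('h \<Rightarrow>\<^sub>L 'h) set" and \<Omega> :: 'h and T :: "'h \<Rightarrow>\<^sub>L 'h"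
  assumes cs: "complex_structure J"
    and sep: "separable_space (euclidean :: 'h topology)"
    and vN: "von_neumann_algebra J M"
    and sv: "separating_vector M \<Omega>"
    and ker: "\<forall>v. T v = 0 \<longrightarrow> v = 0"
    and BM: "B \<subseteq> M" and bB: "bounded B" and x0: "x0 \<in> B"
    and phi: "normal_functional J \<phi>" and U: "open U" and x0U: "\<phi> x0 \<in> U"
  shows "\<exists>n::nat. \<forall>y\<in>B. norm (T ((y - x0) \<Omega>)) < 1 / real (Suc n) \<longrightarrow> \<phi> y \<in> U"
proof (rule ccontr)
  assume "\<not> ?thesis"
  hence "\<forall>n. \<exists>y. y \<in> B \<and> norm (T ((y - x0) \<Omega>)) < 1 / real (Suc n) \<and> \<phi> y \<notin> U" by auto
  then obtain yy where yy: "\<And>n. yy n \<in> B" "\<And>n. norm (T ((yy n - x0) \<Omega>)) < 1 / real (Suc n)"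
    "\<And>n. \<phi> (yy n) \<notin> U" by metis
  obtain R where R: "R > 0" "\<And>y. y \<in> B \<Longrightarrow> norm y \<le> R" using bB unfolding bounded_pos by blast
  have bd: "\<And>n. norm (yy n) \<le> R" using R(2) yy(1) by blast
  obtain r and z :: "'h \<Rightarrow>\<^sub>L 'h" where r: "strict_mono r"
    and lim: "\<And>u v. (\<lambda>n. inner (yy (r n) u) v) \<longlonglongrightarrow> inner (z u) v"
    using wot_subseq[OF sep, of yy R] bd by blast
  have zM: "z \<in> M" using wot_in_M[OF cs vN, of "\<lambda>n. yy (r n)" z] yy(1) BM lim by blast
  have x0M: "x0 \<in> M" using x0 BM by blast
  have Tlim: "(\<lambda>n. T (yy (r n) \<Omega>)) \<longlonglongrightarrow> T (x0 \<Omega>)"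
  proof (rule LIM_zero_cancel, rule Lim_null_comparison)
    show "eventually (\<lambda>n. norm (T (yy (r n) \<Omega>) - T (x0 \<Omega>)) \<le> 1 / real (Suc n)) sequentially"
    proof (rule always_eventually, rule allI)
      fix n
      have "norm (T (yy (r n) \<Omega>) - T (x0 \<Omega>)) = norm (T ((yy (r n) - x0) \<Omega>))"
        by (simp add: blinfun.diff_left blinfun.diff_right)
      also have "\<dots> < 1 / real (Suc (r n))" by (rule yy(2))
      also have "\<dots> \<le> 1 / real (Suc n)" using seq_suble[OF r, of n] by (simp add: frac_le)
      finally show "norm (T (yy (r n) \<Omega>) - T (x0 \<Omega>)) \<le> 1 / real (Suc n)" by simp
    qed
    show "(\<lambda>n. 1 / real (Suc n)) \<longlonglongrightarrow> 0"
      using LIMSEQ_inverse_real_of_nat by (simp add: inverse_eq_divide)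
  qed
  have "T (z \<Omega>) = T (x0 \<Omega>)"
  proof (rule vec_eq_inner)
    fix v
    obtain p where p: "\<And>w. inner (T w) v = inner w p" using adjoint_ex[of T v] by blast
    have "(\<lambda>n. inner (T (yy (r n) \<Omega>)) v) \<longlonglongrightarrow> inner (T (x0 \<Omega>)) v"
      by (intro tendsto_intros Tlim)
    moreover have "(\<lambda>n. inner (T (yy (r n) \<Omega>)) v) \<longlonglongrightarrow> inner (T (z \<Omega>)) v"
      unfolding p by (rule lim)
    ultimately show "inner (T (z \<Omega>)) v = inner (T (x0 \<Omega>)) v" using LIMSEQ_unique by blast
  qed
  hence "T ((z - x0) \<Omega>) = 0" by (simp add: blinfun.diff_left blinfun.diff_right)
  hence "(z - x0) \<Omega> = 0" using ker by blast
  moreover have "z - x0 \<in> M" using vN_diff[OF vN zM x0M] .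
  ultimately have "z - x0 = 0" using sv unfolding separating_vector_def by blast
  hence zx: "z = x0" by simp
  have "(\<lambda>n. \<phi> (yy (r n))) \<longlonglongrightarrow> \<phi> z" using normal_tendsto[OF phi, of "\<lambda>n. yy (r n)" R z] bd lim by blast
  hence "eventually (\<lambda>n. \<phi> (yy (r n)) \<in> U) sequentially" using U x0U zx topological_tendstoD by blast
  then obtain N where "\<And>n. n \<ge> N \<Longrightarrow> \<phi> (yy (r n)) \<in> U" by (auto simp: eventually_sequentially)
  thus False using yy(3) by blast
qed



theorem mainTheorem12:
  fixes J :: "'h::{real_inner,complete_space} \<Rightarrow>\<^sub>L 'h"
    and M :: "('h \<Rightarrow>\<^sub>L 'h) set" and \<Omega> :: 'h and T :: "'h \<Rightarrow>\<^sub>L 'h"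
  assumes "complex_structure J"
    and "separable_space (euclidean :: 'h topology)"
    and "von_neumann_algebra J M"
    and "separating_vector M \<Omega>"
    and "bounded_op J T"
    and "\<forall>v. T v = 0 \<longrightarrow> v = 0"
    and "compact (closure {T (blinfun_apply x \<Omega>) | x. x \<in> M \<and> norm x \<le> 1})"
  shows "dual_Lip_norm J M (\<lambda>x. norm (T (blinfun_apply x \<Omega>)))"
proof -
  note cs = assms(1) and sep = assms(2) and vN = assms(3) and sv = assms(4) and bT = assms(5)
    and ker = assms(6) and cpt = assms(7)
  have TJ: "J (T v) = T (J v)" for v using bT unfolding bounded_op_def comm_iff by blast
  have c1: "\<forall>x\<in>M. 0 \<le> norm (T (blinfun_apply x \<Omega>))" by simp
  have c2: "\<forall>x\<in>M. norm (T (blinfun_apply x \<Omega>)) = 0 \<longrightarrow> x = 0"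
    using ker sv unfolding separating_vector_def by auto
  have c3: "\<forall>x\<in>M. \<forall>y\<in>M. norm (T (blinfun_apply (x + y) \<Omega>)) \<le> norm (T (blinfun_apply x \<Omega>)) + norm (T (blinfun_apply y \<Omega>))"
    by (simp add: blinfun.add_left blinfun.add_right norm_triangle_ineq)
  have c4: "\<forall>x\<in>M. \<forall>c. norm (T (blinfun_apply (cscale_op J c x) \<Omega>)) = cmod c * norm (T (blinfun_apply x \<Omega>))"
  proof (intro ballI allI)
    fix x c
    have "T (blinfun_apply (cscale_op J c x) \<Omega>) = Re c *\<^sub>R T (blinfun_apply x \<Omega>) + Im c *\<^sub>R J (T (blinfun_apply x \<Omega>))"
      by (simp add: cscale_op_def blinfun.add_left blinfun.scaleR_left blinfun.add_right
          blinfun.scaleR_right TJ)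
    thus "norm (T (blinfun_apply (cscale_op J c x) \<Omega>)) = cmod c * norm (T (blinfun_apply x \<Omega>))"
      by (simp add: norm_J_comb[OF cs] norm_complex_def)
  qed
  have c5: "subtopology (L_topology M (\<lambda>x. norm (T (blinfun_apply x \<Omega>)))) B = subtopology (sigma_weak_topology J) B"
    if B: "B \<subseteq> M \<and> bounded B" for B
  proof -
    have BM: "B \<subseteq> M" and bB: "bounded B" using B by auto
    show ?thesis unfolding topology_eq
    proof (intro allI iffI)
      fix A assume "openin (subtopology (L_topology M (\<lambda>x. norm (T (blinfun_apply x \<Omega>)))) B) A"
      thus "openin (subtopology (sigma_weak_topology J) B) A" unfolding L_topology_def
      proof (rule sub_gen_open[rotated])
        fix S x0 assume S: "S \<in> {{y. norm (T (blinfun_apply (y - x) \<Omega>)) < r} | x r. x \<in> M}" and x0: "x0 \<in> S" "x0 \<in> B"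
        from S obtain x r where Sx: "S = {y. norm (T (blinfun_apply (y - x) \<Omega>)) < r}" by blast
        have "norm (T (blinfun_apply (x0 - x) \<Omega>)) < r" using x0 Sx by simp
        from partI[OF vN cpt BM bB x0(2) this] obtain W where
          "openin (sigma_weak_topology J) W" "x0 \<in> W" "\<forall>y\<in>W \<inter> B. norm (T (blinfun_apply (y - x) \<Omega>)) < r" by blast
        thus "\<exists>W. openin (sigma_weak_topology J) W \<and> x0 \<in> W \<and> W \<inter> B \<subseteq> S" using Sx by blast
      qed
    next
      fix A assume "openin (subtopology (sigma_weak_topology J) B) A"
      thus "openin (subtopology (L_topology M (\<lambda>x. norm (T (blinfun_apply x \<Omega>)))) B) A"
        unfolding sigma_weak_topology_def
      proof (rule sub_gen_open[rotated])
        fix S x0 assume S: "S \<in> {{x. \<phi> x \<in> U} | \<phi> U. normal_functional J \<phi> \<and> open U}"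
          and x0: "x0 \<in> S" "x0 \<in> B"
        from S obtain \<phi> U where SU: "S = {x. \<phi> x \<in> U}" "normal_functional J \<phi>" "open U" by blast
        have "\<phi> x0 \<in> U" using x0 SU by simp
        from partII[OF cs sep vN sv ker BM bB x0(2) SU(2) SU(3) this] obtain n :: nat
          where n: "\<forall>y\<in>B. norm (T (blinfun_apply (y - x0) \<Omega>)) < 1 / real (Suc n) \<longrightarrow> \<phi> y \<in> U" by blast
        define W where "W = {y. norm (T (blinfun_apply (y - x0) \<Omega>)) < 1 / real (Suc n)}"
        have "openin (L_topology M (\<lambda>x. norm (T (blinfun_apply x \<Omega>)))) W"
          unfolding L_topology_def W_def using x0 BM
          by (intro topology_generated_by_Basis) blast
        moreover have "x0 \<in> W" by (simp add: W_def)
        moreover have "W \<inter> B \<subseteq> S" using n SU(1) W_def by auto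
        ultimately show "\<exists>W. openin (L_topology M (\<lambda>x. norm (T (blinfun_apply x \<Omega>)))) W \<and> x0 \<in> W \<and> W \<inter> B \<subseteq> S"
          by blast
      qed
    qed
  qed
  show ?thesis unfolding dual_Lip_norm_def using c1 c2 c3 c4 c5 by blast
qed


end
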